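(* Let $E$ be a nonempty closed convex subset of a real Hilbert space $H$. Let $f:E\times E\to\mathbb{R}$ be a bifunction satisfying conditions (A1)–(A4) below, and let $S:E\to E$ be an $(\lambda,\gamma)$-generalized hybrid mapping for some $\lambda,\gamma\in\mathbb{R}$, with $F(S)\cap EP(f)\neq\emptyset$. Let $\{\alpha_n\}$ be a sequence with $0<\alpha\le\alpha_n\le 1$ for all $n$ (for some constant $\alpha>0$), let $\{r_n\}\subset(0,\infty)$ satisfy $\liminf_{n\to\infty} r_n>0$, and let $\{\beta_n\}$ be a sequence in $[b,1]$ for some $b\in(0,1)$ such that $\liminf_{n\to\infty}\beta_n(1-\beta_n)>0$. Let $\{x_n\}$ and $\{u_n\}$ be sequences generated by $x_1=x\in E$ and, for all $n\in\mathbb{N}$, $$u_n\in E \text{ such that } f(u_n,y)+\frac{1}{r_n}\langle y-u_n,u_n-x_n\rangle\ge 0\quad\text{for all } y\in E,$$ $$y_n=(1-\beta_n)x_n+\beta_n Su_n,\qquad x_{n+1}=(1-\alpha_n)x_n+\alpha_n Sy_n.$$ Then $\{x_n\}$ converges weakly to a point $v\in F(S)\cap EP(f)$, where $v=\lim_{n\to\infty}P_{F(S)\cap EP(f)}(x_n)$.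
   Context: $F(S)=\{x\in E: Sx=x\}$ denotes the fixed point set of $S$. A mapping $S:E\to E$ is called $(\lambda,\gamma)$-generalized hybrid if $\lambda\|Sx-Sy\|^2+(1-\lambda)\|x-Sy\|^2\le \gamma\|Sx-y\|^2+(1-\gamma)\|x-y\|^2$ for all $x,y\in E$. For $f:E\times E\to\mathbb{R}$, $EP(f)=\{x\in E: f(x,y)\ge 0 \text{ for all } y\in E\}$. Conditions: (A1) $f(x,x)=0$ for all $x\in E$; (A2) $f(x,y)+f(y,x)\le 0$ for all $x,y\in E$; (A3) for all $x,y,z\in E$, $\lim_{t\downarrow 0} f(tz+(1-t)x,y)\le f(x,y)$; (A4) for each $x\in E$, $y\mapsto f(x,y)$ is convex and lower semicontinuous. For a nonempty closed convex $K\subset H$, $P_K$ denotes the metric (nearest point) projection of $H$ onto $K$; the limit defining $v$ is in norm. *)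

theory Defs
  imports "HOL-Analysis.Analysis" "HOL-Library.Extended_Real"
begin

definition fixset :: "'a set \<Rightarrow> ('a \<Rightarrow> 'a) \<Rightarrow> 'a set" where
  "fixset E S = {x \<in> E. S x = x}"

definition EP :: "'a set \<Rightarrow> ('a \<Rightarrow> 'a \<Rightarrow> real) \<Rightarrow> 'a set" where
  "EP E f = {x \<in> E. \<forall>y\<in>E. f x y \<ge> 0}"

definition generalized_hybrid ::
  "'a::real_inner set \<Rightarrow> real \<Rightarrow> real \<Rightarrow> ('a \<Rightarrow> 'a) \<Rightarrow> bool" where
  "generalized_hybrid E lam gam S \<longleftrightarrow> (\<forall>x\<in>E. S x \<in> E) \<and>
     (\<forall>x\<in>E. \<forall>y\<in>E. lam * (norm (S x - S y))\<^sup>2 + (1 - lam) * (norm (x - S y))\<^sup>2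
                     \<le> gam * (norm (S x - y))\<^sup>2 + (1 - gam) * (norm (x - y))\<^sup>2)"

definition lsc_on :: "'a::topological_space set \<Rightarrow> ('a \<Rightarrow> real) \<Rightarrow> bool" where
  "lsc_on E g \<longleftrightarrow> (\<forall>y\<in>E. \<forall>c. c < g y \<longrightarrow> (\<forall>\<^sub>F z in at y within E. c < g z))"

text \<open>Conditions (A1)-(A4) for a bifunction on E.  (A3) is read with limsup.\<close>
definition bifunction_conditions :: "'a::real_normed_vector set \<Rightarrow> ('a \<Rightarrow> 'a \<Rightarrow> real) \<Rightarrow> bool" where
  "bifunction_conditions E f \<longleftrightarrow>
     (\<forall>x\<in>E. f x x = 0) \<and>
     (\<forall>x\<in>E. \<forall>y\<in>E. f x y + f y x \<le> 0) \<and>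
     (\<forall>x\<in>E. \<forall>y\<in>E. \<forall>z\<in>E.
        Limsup (at_right 0) (\<lambda>t::real. ereal (f (t *\<^sub>R z + (1 - t) *\<^sub>R x) y)) \<le> ereal (f x y)) \<and>
     (\<forall>x\<in>E. convex_on E (\<lambda>y. f x y) \<and> lsc_on E (\<lambda>y. f x y))"

definition metric_proj :: "'a::real_normed_vector set \<Rightarrow> 'a \<Rightarrow> 'a" where
  "metric_proj K x = (THE p. p \<in> K \<and> (\<forall>q\<in>K. norm (x - p) \<le> norm (x - q)))"

definition weakly_converges :: "(nat \<Rightarrow> 'a::real_inner) \<Rightarrow> 'a \<Rightarrow> bool" where
  "weakly_converges x v \<longleftrightarrow> (\<forall>w. (\<lambda>n. x n \<bullet> w) \<longlonglongrightarrow> v \<bullet> w)"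

end

theory Submission
  imports Defs "HOL-Library.Diagonal_Subsequence"
begin


lemma parallelogram_ineq:
  fixes a b :: "'a::real_inner"
  shows "(norm (a - b))\<^sup>2 = 2 * (norm a)\<^sup>2 + 2 * (norm b)\<^sup>2 - (norm (a + b))\<^sup>2"
  by (simp add: power2_norm_eq_inner inner_diff inner_add inner_commute)

lemma proj_exists:
  fixes K :: "'a::{real_inner,complete_space} set"
  assumes K: "closed K" "convex K" "K \<noteq> {}"
  shows "\<exists>p\<in>K. \<forall>q\<in>K. norm (x - p) \<le> norm (x - q)"
proof -
  define d where "d = infdist x K"
  have d0: "d \<ge> 0" by (simp add: d_def infdist_nonneg)
  have dle: "d \<le> norm (x - q)" if "q \<in> K" for q
    using infdist_le[OF that, of x] by (simp add: d_def dist_norm)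
  define e where "e n = 1 / (real n + 1)" for n
  have e0: "e n > 0" for n by (simp add: e_def)
  have ex: "\<exists>q\<in>K. norm (x - q) < d + e n" for n
  proof -
    have "(INF a\<in>K. dist x a) < d + e n" using e0[of n] K(3) by (simp add: d_def infdist_notempty)
    then obtain a where "a\<in>K" "dist x a < d + e n" using cINF_less_iff[OF K(3) bdd_below_image_dist] by blast
    then show ?thesis by (auto simp: dist_norm)
  qed
  then obtain q where q: "\<And>n. q n \<in> K" "\<And>n. norm (x - q n) < d + e n" by metis
  have bnd: "(norm (q m - q n))\<^sup>2 \<le> 2 * (2*d+1) * (e m + e n)" for m n
  proof -
    have mid: "(1/2) *\<^sub>R q m + (1/2) *\<^sub>R q n \<in> K"
      using K(2) q(1) by (simp add: convex_def)
    have "2 * d \<le> norm ((x - q n) + (x - q m))"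
    proof -
      have "(x - q n) + (x - q m) = 2 *\<^sub>R (x - ((1/2) *\<^sub>R q m + (1/2) *\<^sub>R q n))"
        by (simp add: algebra_simps scaleR_2)
      then show ?thesis using dle[OF mid] by simp
    qed
    hence sq: "(2*d)\<^sup>2 \<le> (norm ((x - q n) + (x - q m)))\<^sup>2" using d0 by (intro power_mono) auto
    have e1: "e k \<le> 1" for k by (simp add: e_def)
    have a: "(norm (x - q k))\<^sup>2 \<le> d\<^sup>2 + (2*d+1) * e k" for k
    proof -
      have "norm (x - q k) \<le> d + e k" using q(2)[of k] by simp
      hence "(norm (x - q k))\<^sup>2 \<le> (d + e k)\<^sup>2" by (simp add: power_mono)
      also have "\<dots> = d\<^sup>2 + (2*d) * e k + e k * e k" by (simp add: power2_eq_square algebra_simps)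
      also have "\<dots> \<le> d\<^sup>2 + (2*d) * e k + 1 * e k" using e1[of k] e0[of k]
        by (intro add_left_mono mult_right_mono) auto
      finally show ?thesis by (simp add: algebra_simps)
    qed
    have "q m - q n = (x - q n) - (x - q m)" by simp
    hence "(norm (q m - q n))\<^sup>2 = 2 * (norm (x - q n))\<^sup>2 + 2 * (norm (x - q m))\<^sup>2 - (norm ((x - q n) + (x - q m)))\<^sup>2"
      using parallelogram_ineq by metis
    then show ?thesis using a[of m] a[of n] sq by (simp add: power2_eq_square algebra_simps)
  qed
  have "Cauchy q"
  proof (rule metric_CauchyI)
    fix eps :: real assume "eps > 0"
    define c where "c = 4 * (2*d+1)"
    have c0: "c > 0" using d0 by (simp add: c_def)
    obtain M :: nat where M: "c / eps\<^sup>2 < real M + 1"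
      using reals_Archimedean2[of "c / eps\<^sup>2"] by (metis add.commute add_strict_increasing zero_less_one order_less_imp_le linorder_not_le of_nat_0_le_iff)
    have "c / (real M + 1) < eps\<^sup>2"
      using M `eps > 0` c0 by (simp add: field_simps)
    show "\<exists>M. \<forall>m\<ge>M. \<forall>n\<ge>M. dist (q m) (q n) < eps"
    proof (intro exI allI impI)
      fix m n assume mn: "m \<ge> M" "n \<ge> M"
      have em: "e m \<le> 1 / (real M + 1)" "e n \<le> 1 / (real M + 1)" using mn
        by (auto simp: e_def intro!: divide_left_mono)
      have "(norm (q m - q n))\<^sup>2 \<le> 2 * (2*d+1) * (e m + e n)" by (rule bnd)
      also have "\<dots> \<le> 2 * (2*d+1) * (2 / (real M + 1))"
        using em d0 by (intro mult_left_mono) auto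
      also have "\<dots> = c / (real M + 1)" by (simp add: c_def)
      also have "\<dots> < eps\<^sup>2" by fact
      finally have "(norm (q m - q n))\<^sup>2 < eps\<^sup>2" .
      then show "dist (q m) (q n) < eps" using `eps > 0`
        by (simp add: dist_norm power_less_imp_less_base)
    qed
  qed
  then obtain p where p: "q \<longlonglongrightarrow> p" using Cauchy_convergent_iff convergent_def by blast
  have pK: "p \<in> K" using closed_sequentially[OF K(1)] q(1) p by blast
  have "norm (x - p) \<le> norm (x - q')" if "q' \<in> K" for q'
  proof -
    have l1: "(\<lambda>n. norm (x - q n)) \<longlonglongrightarrow> norm (x - p)" by (intro tendsto_intros p)
    have "(\<lambda>n. e n) \<longlonglongrightarrow> 0" unfolding e_def using LIMSEQ_inverse_real_of_nat
      by (simp add: inverse_eq_divide add.commute)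
    hence l2: "(\<lambda>n. norm (x - q') + e n) \<longlonglongrightarrow> norm (x - q') + 0" by (intro tendsto_intros)
    have "norm (x - q n) \<le> norm (x - q') + e n" for n using q(2)[of n] dle[OF that] by simp
    then show ?thesis using LIMSEQ_le[OF l1 l2] by simp
  qed
  then show ?thesis using pK by blast
qed



lemma norm_diff_sq:
  fixes a b :: "'a::real_inner"
  shows "(norm (a - b))\<^sup>2 = (norm a)\<^sup>2 - 2 * (a \<bullet> b) + (norm b)\<^sup>2"
  by (simp add: power2_norm_eq_inner inner_diff inner_commute)

lemma norm_add_sq:
  fixes a b :: "'a::real_inner"
  shows "(norm (a + b))\<^sup>2 = (norm a)\<^sup>2 + 2 * (a \<bullet> b) + (norm b)\<^sup>2"
  by (simp add: power2_norm_eq_inner inner_add inner_commute)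

lemma proj_char1:
  fixes K :: "'a::real_inner set"
  assumes "convex K" "p \<in> K" "\<forall>q\<in>K. norm (x - p) \<le> norm (x - q)" "q \<in> K"
  shows "(x - p) \<bullet> (q - p) \<le> 0"
proof (rule ccontr)
  assume "\<not> ?thesis"
  hence c: "(x - p) \<bullet> (q - p) > 0" by simp
  define c where "c = (x - p) \<bullet> (q - p)"
  have "q \<noteq> p" using c by auto
  hence n: "(norm (q - p))\<^sup>2 > 0" by simp
  define t where "t = min 1 (c / (norm (q - p))\<^sup>2)"
  have t0: "t > 0" using c n by (simp add: t_def c_def)
  have t1: "t \<le> 1" by (simp add: t_def)
  have tn: "t * (norm (q - p))\<^sup>2 \<le> c" using n c_def c
    by (simp add: t_def min_def field_simps split: if_splits)
  have "p + t *\<^sub>R (q - p) = (1 - t) *\<^sub>R p + t *\<^sub>R q" by (simp add: algebra_simps)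
  also have "\<dots> \<in> K" using assms(1,2,4) t0 t1 by (simp add: convex_def)
  finally have "norm (x - p) \<le> norm (x - (p + t *\<^sub>R (q - p)))" using assms(3) by blast
  hence "(norm (x - p))\<^sup>2 \<le> (norm ((x - p) - t *\<^sub>R (q - p)))\<^sup>2"
    by (intro power_mono) (auto simp: algebra_simps)
  also have "\<dots> = (norm (x - p))\<^sup>2 - 2 * t * c + t * (t * (norm (q - p))\<^sup>2)"
    by (subst norm_diff_sq) (simp add: c_def power2_eq_square)
  finally have "2 * t * c \<le> t * (t * (norm (q - p))\<^sup>2)" by simp
  also have "\<dots> \<le> t * c" using tn t0 by (intro mult_left_mono) auto
  finally have "2 * (t * c) \<le> 1 * (t * c)" by simp
  moreover have "t * c > 0" using t0 c c_def by simp
  ultimately show False by linarith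
qed

lemma proj_char2:
  fixes K :: "'a::real_inner set"
  assumes "\<forall>q\<in>K. (x - p) \<bullet> (q - p) \<le> 0" "q \<in> K"
  shows "(norm (x - q))\<^sup>2 \<ge> (norm (x - p))\<^sup>2 + (norm (p - q))\<^sup>2"
proof -
  have "x - q = (x - p) - (q - p)" by simp
  hence "(norm (x - q))\<^sup>2 = (norm (x - p))\<^sup>2 + (norm (p - q))\<^sup>2 - 2 * ((x - p) \<bullet> (q - p))"
    by (simp add: power2_norm_eq_inner inner_diff inner_commute algebra_simps)
  then show ?thesis using assms by force
qed

lemma metric_proj:
  fixes K :: "'a::{real_inner,complete_space} set"
  assumes K: "closed K" "convex K" "K \<noteq> {}"
  shows "metric_proj K x \<in> K" "\<And>q. q \<in> K \<Longrightarrow> (x - metric_proj K x) \<bullet> (q - metric_proj K x) \<le> 0"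
proof -
  obtain p where p: "p \<in> K" "\<forall>q\<in>K. norm (x - p) \<le> norm (x - q)" using proj_exists[OF K] by blast
  have "metric_proj K x = p" unfolding metric_proj_def
  proof (rule the_equality)
    show "p \<in> K \<and> (\<forall>q\<in>K. norm (x - p) \<le> norm (x - q))" using p by blast
    fix p' assume p': "p' \<in> K \<and> (\<forall>q\<in>K. norm (x - p') \<le> norm (x - q))"
    have "\<forall>q\<in>K. (x - p) \<bullet> (q - p) \<le> 0" using proj_char1[OF K(2) p] by blast
    from proj_char2[OF this, of p'] p' p(1)
    have "(norm (x - p'))\<^sup>2 \<ge> (norm (x - p))\<^sup>2 + (norm (p - p'))\<^sup>2" by blast
    moreover have "norm (x - p') \<le> norm (x - p)" using p' p(1) by blast
    hence "(norm (x - p'))\<^sup>2 \<le> (norm (x - p))\<^sup>2" by (intro power_mono) auto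
    ultimately have "(norm (p - p'))\<^sup>2 \<le> 0" by linarith
    then show "p' = p" by simp
  qed
  then show "metric_proj K x \<in> K" "\<And>q. q \<in> K \<Longrightarrow> (x - metric_proj K x) \<bullet> (q - metric_proj K x) \<le> 0"
    using p proj_char1[OF K(2) p] by auto
qed

lemma weak_closed:
  fixes K :: "'a::{real_inner,complete_space} set"
  assumes K: "closed K" "convex K" and yK: "\<And>n. y n \<in> K"
    and w: "\<And>w. (\<lambda>n. y n \<bullet> w) \<longlonglongrightarrow> z \<bullet> w"
  shows "z \<in> K"
proof -
  have ne: "K \<noteq> {}" using yK by blast
  define p where "p = metric_proj K z"
  have pK: "p \<in> K" using metric_proj[OF K ne] p_def by simp
  have le: "(z - p) \<bullet> (y n - p) \<le> 0" for n using metric_proj(2)[OF K ne yK[of n]] p_def by simp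
  have "(\<lambda>n. (z - p) \<bullet> (y n - p)) \<longlonglongrightarrow> (z - p) \<bullet> (z - p)"
  proof -
    have "(\<lambda>n. y n \<bullet> (z - p) - p \<bullet> (z - p)) \<longlonglongrightarrow> z \<bullet> (z - p) - p \<bullet> (z - p)"
      by (intro tendsto_intros w)
    then show ?thesis by (simp add: inner_diff inner_commute)
  qed
  hence "(z - p) \<bullet> (z - p) \<le> 0" using le by (simp add: LIMSEQ_le_const2)
  hence "z = p" by (metis antisym inner_ge_zero inner_eq_zero_iff eq_iff_diff_eq_0)
  then show ?thesis using pK by simp
qed



lemma proj_orth:
  fixes M :: "'a::{real_inner,complete_space} set"
  assumes "subspace M" "closed M" "v \<in> M"
  shows "(w - metric_proj M w) \<bullet> v = 0"
proof -
  have ne: "M \<noteq> {}" using assms(1) subspace_0 by blast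
  have cv: "convex M" using assms(1) by (rule subspace_imp_convex)
  define m where "m = metric_proj M w"
  have mM: "m \<in> M" using metric_proj(1)[OF assms(2) cv ne] m_def by simp
  have "m + v \<in> M" "m - v \<in> M" using assms(1,3) mM by (auto intro: subspace_add subspace_diff)
  hence "(w - m) \<bullet> ((m + v) - m) \<le> 0" "(w - m) \<bullet> ((m - v) - m) \<le> 0"
    using metric_proj(2)[OF assms(2) cv ne, of _ w] m_def by blast+
  hence "(w - m) \<bullet> v \<le> 0" "(w - m) \<bullet> v \<ge> 0" by (simp_all add: inner_diff_right)
  then show ?thesis unfolding m_def[symmetric] by simp
qed

lemma bounded_subseq_conv:
  fixes X :: "nat \<Rightarrow> real"
  assumes "\<And>n. \<bar>X n\<bar> \<le> C"
  shows "\<exists>r. strict_mono r \<and> convergent (X \<circ> r)"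
proof -
  obtain r where r: "strict_mono r" "monoseq (\<lambda>n. X (r n))" using seq_monosub by blast
  have "Bseq (\<lambda>n. X (r n))" using assms by (intro BseqI'[of _ C]) auto
  then have "convergent (\<lambda>n. X (r n))" using r(2) Bseq_monoseq_convergent by blast
  then show ?thesis using r(1) by (auto simp: o_def)
qed

lemma weak_compact:
  fixes y :: "nat \<Rightarrow> 'a::{real_inner,complete_space}"
  assumes B: "\<And>n. norm (y n) \<le> B"
  shows "\<exists>s z. strict_mono s \<and> (\<forall>w. (\<lambda>i. y (s i) \<bullet> w) \<longlonglongrightarrow> z \<bullet> w)"
proof -
  define P where "P = (\<lambda>k (s::nat\<Rightarrow>nat). convergent (\<lambda>i. y (s i) \<bullet> y k))"
  interpret subseqs P
  proof
    fix k and s :: "nat \<Rightarrow> nat" assume "strict_mono s"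
    have "\<bar>y (s i) \<bullet> y k\<bar> \<le> B * B" for i
    proof -
      have "\<bar>y (s i) \<bullet> y k\<bar> \<le> norm (y (s i)) * norm (y k)" by (rule Cauchy_Schwarz_ineq2)
      also have "\<dots> \<le> B * B" using B by (intro mult_mono) (auto intro: order_trans[OF norm_ge_zero])
      finally show ?thesis .
    qed
    then obtain r where "strict_mono r" "convergent ((\<lambda>i. y (s i) \<bullet> y k) \<circ> r)"
      using bounded_subseq_conv[of "\<lambda>i. y (s i) \<bullet> y k" "B * B"] by blast
    then show "\<exists>r'. strict_mono r' \<and> P k (s \<circ> r')" by (auto simp: P_def o_def)
  qed
  define s where "s = diagseq"
  have s: "strict_mono s" by (simp add: s_def subseq_diagseq)
  define Y where "Y i = y (s i)" for i
  have YB: "norm (Y i) \<le> B" for i by (simp add: Y_def B)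
  have B0: "B \<ge> 0" using B[of 0] norm_ge_zero order_trans by blast
  have convk: "convergent (\<lambda>i. Y i \<bullet> y k)" for k
  proof -
    have "P k (diagseq \<circ> ((+) (Suc k)))"
      by (rule diagseq_holds) (auto simp: P_def o_def intro: convergent_subseq_convergent[unfolded o_def])
    hence "convergent (\<lambda>i. Y (i + Suc k) \<bullet> y k)" by (simp add: P_def Y_def s_def o_def add.commute)
    then obtain l where "(\<lambda>i. Y (i + Suc k) \<bullet> y k) \<longlonglongrightarrow> l" unfolding convergent_def by blast
    hence "(\<lambda>i. Y i \<bullet> y k) \<longlonglongrightarrow> l" by (rule LIMSEQ_offset[where f="\<lambda>i. Y i \<bullet> y k"])
    then show ?thesis unfolding convergent_def by blast
  qed
  define C where "C = {w. convergent (\<lambda>i. Y i \<bullet> w)}"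
  have subC: "subspace C" unfolding subspace_def C_def
    by (auto simp: inner_add_right intro!: convergent_add convergent_mult convergent_const)
  have clC: "closed C" unfolding closed_sequential_limits
  proof (intro allI impI, elim conjE)
    fix wk :: "nat \<Rightarrow> 'a" and w assume wk: "\<forall>n. wk n \<in> C" "wk \<longlonglongrightarrow> w"
    have "Cauchy (\<lambda>i. Y i \<bullet> w)"
    proof (rule metric_CauchyI)
      fix e :: real assume e: "e > 0"
      define d where "d = e / (3 * (B + 1))"
      have d: "d > 0" using e B0 by (simp add: d_def)
      obtain k where k: "norm (wk k - w) < d"
        using wk(2) d unfolding LIMSEQ_iff by (metis order_refl)
      have "Cauchy (\<lambda>i. Y i \<bullet> wk k)" using wk(1) by (simp add: C_def Cauchy_convergent_iff)
      then obtain N where N: "\<And>i j. i \<ge> N \<Longrightarrow> j \<ge> N \<Longrightarrow> dist (Y i \<bullet> wk k) (Y j \<bullet> wk k) < e / 3"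
        using e unfolding Cauchy_def by (metis zero_less_divide_iff zero_less_numeral)
      have sm: "\<bar>Y i \<bullet> w - Y i \<bullet> wk k\<bar> \<le> e / 3" for i
      proof -
        have "\<bar>Y i \<bullet> w - Y i \<bullet> wk k\<bar> = \<bar>Y i \<bullet> (wk k - w)\<bar>" by (simp add: inner_diff_right)
        also have "\<dots> \<le> norm (Y i) * norm (wk k - w)" by (rule Cauchy_Schwarz_ineq2)
        also have "\<dots> \<le> (B + 1) * d" using YB[of i] k B0 d
          by (intro mult_mono) auto
        also have "\<dots> = e / 3" using B0 by (simp add: d_def field_simps)
        finally show ?thesis .
      qed
      show "\<exists>M. \<forall>m\<ge>M. \<forall>n\<ge>M. dist (Y m \<bullet> w) (Y n \<bullet> w) < e"
      proof (intro exI allI impI)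
        fix i j assume "i \<ge> N" "j \<ge> N"
        from N[OF this] sm[of i] sm[of j]
        show "dist (Y i \<bullet> w) (Y j \<bullet> w) < e" unfolding dist_real_def by linarith
      qed
    qed
    then show "w \<in> C" by (simp add: C_def Cauchy_convergent_iff)
  qed
  have YC: "Y i \<in> C" for i
  proof -
    have "range y \<subseteq> C" using convk by (auto simp: C_def)
    moreover have "Y i \<in> range y" by (simp add: Y_def)
    ultimately show ?thesis by blast
  qed
  have allconv: "convergent (\<lambda>i. Y i \<bullet> w)" for w
  proof -
    define m where "m = metric_proj C w"
    have ne: "C \<noteq> {}" using subC subspace_0 by blast
    have mC: "m \<in> C" using metric_proj(1)[OF clC subspace_imp_convex[OF subC] ne] m_def by simp
    have "Y i \<bullet> w = Y i \<bullet> m" for i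
    proof -
      have "(w - m) \<bullet> Y i = 0" using proj_orth[OF subC clC YC] m_def by simp
      then show ?thesis by (simp add: inner_diff_right inner_commute)
    qed
    then show ?thesis using mC by (simp add: C_def)
  qed
  define L where "L w = lim (\<lambda>i. Y i \<bullet> w)" for w
  have LL: "(\<lambda>i. Y i \<bullet> w) \<longlonglongrightarrow> L w" for w
    using allconv[of w] by (simp add: L_def convergent_LIMSEQ_iff)
  have Ladd: "L (a + b) = L a + L b" for a b
  proof -
    have "(\<lambda>i. Y i \<bullet> (a + b)) \<longlonglongrightarrow> L a + L b"
      using tendsto_add[OF LL[of a] LL[of b]] by (simp add: inner_add_right)
    then show ?thesis using LL[of "a+b"] LIMSEQ_unique by blast
  qed
  have Lsc: "L (c *\<^sub>R a) = c * L a" for c a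
  proof -
    have "(\<lambda>i. Y i \<bullet> (c *\<^sub>R a)) \<longlonglongrightarrow> c * L a"
      using tendsto_mult_left[OF LL[of a], of c] by simp
    then show ?thesis using LL[of "c *\<^sub>R a"] LIMSEQ_unique by blast
  qed
  have Lb: "\<bar>L w\<bar> \<le> B * norm w" for w
  proof -
    have "(\<lambda>i. \<bar>Y i \<bullet> w\<bar>) \<longlonglongrightarrow> \<bar>L w\<bar>" by (intro tendsto_intros LL)
    moreover have "\<bar>Y i \<bullet> w\<bar> \<le> B * norm w" for i
      using Cauchy_Schwarz_ineq2[of "Y i" w] YB[of i] by (meson mult_right_mono norm_ge_zero order_trans)
    ultimately show ?thesis by (simp add: LIMSEQ_le_const2)
  qed
  have Ldiff: "L (a - b) = L a - L b" for a b
    using Ladd[of "a - b" b] by simp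
  have "\<exists>z. \<forall>w. L w = z \<bullet> w"
  proof (cases "\<forall>w. L w = 0")
    case True then show ?thesis by (intro exI[of _ 0]) simp
  next
    case False
    then obtain w0 where w0: "L w0 \<noteq> 0" by blast
    define N where "N = {w. L w = 0}"
    have subN: "subspace N" unfolding subspace_def N_def
      using Ladd Lsc Lsc[of 0 0] by auto
    have clN: "closed N" unfolding closed_sequential_limits
    proof (intro allI impI, elim conjE)
      fix wk :: "nat \<Rightarrow> 'a" and w assume wk: "\<forall>n. wk n \<in> N" "wk \<longlonglongrightarrow> w"
      have "\<bar>L w\<bar> \<le> B * norm (wk n - w)" for n
        using Lb[of "wk n - w"] wk(1) Ldiff[of "wk n" w] by (simp add: N_def)
      moreover have "(\<lambda>n. B * norm (wk n - w)) \<longlonglongrightarrow> B * 0"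
        using wk(2) by (intro tendsto_intros) (simp add: LIM_zero tendsto_norm_zero)
      ultimately have "\<bar>L w\<bar> \<le> B * 0" by (intro LIMSEQ_le_const[of "\<lambda>n. B * norm (wk n - w)"]) auto
      then show "w \<in> N" by (simp add: N_def)
    qed
    define e where "e = w0 - metric_proj N w0"
    have neN: "N \<noteq> {}" using subN subspace_0 by blast
    have mN: "metric_proj N w0 \<in> N" using metric_proj(1)[OF clN subspace_imp_convex[OF subN] neN] by simp
    have Le: "L e = L w0" using mN Ldiff by (simp add: e_def N_def)
    have eorth: "e \<bullet> v = 0" if "v \<in> N" for v using proj_orth[OF subN clN that] by (simp add: e_def)
    have e0: "e \<bullet> e \<noteq> 0"
    proof
      assume "e \<bullet> e = 0" hence "e = 0" by simp
      hence "L e = 0" using Lsc[of 0 0] by simp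
      thus False using Le w0 by simp
    qed
    have key: "e \<bullet> w = (L w / L e) * (e \<bullet> e)" for w
    proof -
      have "w - (L w / L e) *\<^sub>R e \<in> N" using Le w0 Ldiff Lsc by (simp add: N_def)
      hence "e \<bullet> (w - (L w / L e) *\<^sub>R e) = 0" by (rule eorth)
      then show ?thesis by (simp add: inner_diff_right)
    qed
    show ?thesis
    proof (intro exI allI)
      fix w
      have "((L e / (e \<bullet> e)) *\<^sub>R e) \<bullet> w = (L e / (e \<bullet> e)) * (e \<bullet> w)" by simp
      also have "\<dots> = L w" using key[of w] e0 Le w0 by (simp add: field_simps)
      finally show "L w = ((L e / (e \<bullet> e)) *\<^sub>R e) \<bullet> w" by simp
    qed
  qed
  then obtain z where z: "\<And>w. L w = z \<bullet> w" by blast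
  show ?thesis using s LL z by (auto simp: Y_def)
qed



lemma conv_sq:
  fixes a b :: "'a::real_inner"
  shows "(norm ((1 - t) *\<^sub>R a + t *\<^sub>R b))\<^sup>2 =
    (1 - t) * (norm a)\<^sup>2 + t * (norm b)\<^sup>2 - t * (1 - t) * (norm (a - b))\<^sup>2"
  unfolding power2_norm_eq_inner
  by (simp add: inner_add_left inner_add_right inner_diff_left inner_diff_right inner_commute algebra_simps)

lemma subseq_from_frequent:
  assumes "\<forall>N. \<exists>n\<ge>N. P (n::nat)"
  shows "\<exists>s::nat\<Rightarrow>nat. strict_mono s \<and> (\<forall>i. P (s i))"
proof -
  define s where "s = rec_nat (SOME n. P n) (\<lambda>_ m. SOME n. n \<ge> Suc m \<and> P n)"
  have s0: "s 0 = (SOME n. P n)" and sS: "s (Suc i) = (SOME n. n \<ge> Suc (s i) \<and> P n)" for i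
    by (simp_all add: s_def)
  have P0: "P (s 0)" unfolding s0 using assms by (metis someI_ex)
  have PS: "s (Suc i) \<ge> Suc (s i) \<and> P (s (Suc i))" for i
    unfolding sS using assms by (metis (mono_tags, lifting) someI_ex)
  have sm: "strict_mono s" unfolding strict_mono_Suc_iff using PS by (simp add: Suc_le_eq)
  have Ps: "\<forall>i. P (s i)"
  proof
    fix i show "P (s i)" by (cases i) (use P0 PS in auto)
  qed
  show ?thesis using sm Ps by blast
qed

lemma not_tendsto_subseq:
  fixes X :: "nat \<Rightarrow> real"
  assumes "\<not> (X \<longlonglongrightarrow> L)"
  shows "\<exists>e>0. \<exists>s::nat\<Rightarrow>nat. strict_mono s \<and> (\<forall>i. e \<le> \<bar>X (s i) - L\<bar>)"
proof -
  from assms obtain e where e: "e > 0" "\<forall>N. \<exists>n\<ge>N. \<not> \<bar>X n - L\<bar> < e"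
    unfolding LIMSEQ_def dist_real_def by blast
  then have "\<forall>N. \<exists>n\<ge>N. e \<le> \<bar>X n - L\<bar>" by (meson not_le)
  from subseq_from_frequent[OF this] e(1) show ?thesis by blast
qed


lemma fejer_mono:
  assumes "\<And>n. norm (x (Suc n) - p) \<le> norm (x n - (p::'a::real_normed_vector))" "n \<le> m"
  shows "norm (x m - p) \<le> norm (x n - p)"
  using assms(2)
proof (induction m rule: dec_induct)
  case (step m) then show ?case using assms(1)[of m] by linarith
qed simp

lemma TT:
  fixes F :: "'a::{real_inner,complete_space} set"
  assumes F: "closed F" "convex F" "F \<noteq> {}"
    and fej: "\<And>p n. p \<in> F \<Longrightarrow> norm (x (Suc n) - p) \<le> norm (x n - p)"
  shows "\<exists>v\<in>F. (\<lambda>n. metric_proj F (x n)) \<longlonglongrightarrow> v"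
proof -
  define P where "P n = metric_proj F (x n)" for n
  have PF: "P n \<in> F" for n using metric_proj(1)[OF F] P_def by simp
  define d where "d n = (norm (x n - P n))\<^sup>2" for n
  have key: "(norm (P m - P n))\<^sup>2 \<le> d n - d m" if "n \<le> m" for m n
  proof -
    have "\<forall>q\<in>F. (x m - P m) \<bullet> (q - P m) \<le> 0" using metric_proj(2)[OF F] P_def by simp
    from proj_char2[OF this PF[of n]]
    have "(norm (x m - P n))\<^sup>2 \<ge> d m + (norm (P m - P n))\<^sup>2" by (simp add: d_def)
    moreover have "norm (x m - P n) \<le> norm (x n - P n)"
      using fejer_mono[of x "P n" n m] fej PF that by blast
    hence "(norm (x m - P n))\<^sup>2 \<le> d n" unfolding d_def by (intro power_mono) auto
    ultimately show ?thesis by linarith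
  qed
  have dec: "decseq d" unfolding decseq_def
  proof (intro allI impI)
    fix n m :: nat assume "n \<le> m"
    from key[OF this] show "d m \<le> d n" by (smt (verit) zero_le_power2)
  qed
  have d0: "\<forall>i. 0 \<le> d i" by (simp add: d_def)
  obtain L where L: "d \<longlonglongrightarrow> L" using decseq_convergent[OF dec d0] by blast
  have "Cauchy d" using L by (rule LIMSEQ_imp_Cauchy)
  have "Cauchy P"
  proof (rule metric_CauchyI)
    fix e :: real assume e: "e > 0"
    then obtain N where N: "\<And>m n. m \<ge> N \<Longrightarrow> n \<ge> N \<Longrightarrow> dist (d m) (d n) < e\<^sup>2"
      using \<open>Cauchy d\<close> unfolding Cauchy_def by (meson zero_less_power)
    show "\<exists>M. \<forall>m\<ge>M. \<forall>n\<ge>M. dist (P m) (P n) < e"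
    proof (intro exI allI impI)
      fix m n assume mn: "m \<ge> N" "n \<ge> N"
      have "(norm (P m - P n))\<^sup>2 < e\<^sup>2"
      proof (cases "n \<le> m")
        case True then show ?thesis using key[OF True] N[OF mn] by (simp add: dist_real_def)
      next
        case False
        hence "m \<le> n" by simp
        from key[OF this] N[OF mn] show ?thesis by (simp add: dist_real_def norm_minus_commute)
      qed
      then show "dist (P m) (P n) < e" using e by (simp add: dist_norm power_less_imp_less_base)
    qed
  qed
  then obtain v where v: "P \<longlonglongrightarrow> v" using Cauchy_convergent_iff convergent_def by blast
  have "v \<in> F" using closed_sequentially[OF F(1)] PF v by blast
  moreover have "(\<lambda>n. metric_proj F (x n)) = P" by (rule ext) (simp add: P_def)
  ultimately show ?thesis using v by auto
qed


lemma lsc_closed_sublevel: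
  fixes g :: "'a::metric_space \<Rightarrow> real"
  assumes E: "closed E" and g: "lsc_on E g"
  shows "closed {z\<in>E. g z \<le> c}"
  unfolding closed_sequential_limits
proof (intro allI impI, elim conjE)
  fix w :: "nat \<Rightarrow> 'a" and l assume w: "\<forall>n. w n \<in> {z\<in>E. g z \<le> c}" "w \<longlonglongrightarrow> l"
  have wE: "\<And>n. w n \<in> E" and wc: "\<And>n. g (w n) \<le> c" using w(1) by simp_all
  have lE: "l \<in> E" using closed_sequentially[OF E] wE w(2) by blast
  have "g l \<le> c"
  proof (rule ccontr)
    assume "\<not> g l \<le> c"
    hence cl: "c < g l" by simp
    with g lE have "\<forall>\<^sub>F z in at l within E. c < g z" unfolding lsc_on_def by blast
    then obtain dl where dl: "dl > 0" "\<And>z. z \<in> E \<Longrightarrow> z \<noteq> l \<Longrightarrow> dist z l < dl \<Longrightarrow> c < g z"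
      unfolding eventually_at by metis
    obtain n where n: "dist (w n) l < dl" using w(2) dl(1) unfolding LIMSEQ_def by blast
    show False
    proof (cases "w n = l")
      case True then show False using wc[of n] cl by simp
    next
      case False then show False using dl(2)[OF wE[of n] False n] wc[of n] by simp
    qed
  qed
  then show "l \<in> {z\<in>E. g z \<le> c}" using lE by simp
qed


lemma convE:
  assumes "convex E" "a \<in> E" "b \<in> E" "0 \<le> t" "t \<le> 1"
  shows "(1 - t) *\<^sub>R a + t *\<^sub>R b \<in> E"
  using assms unfolding convex_def by auto

lemma liminf_pos:
  assumes "liminf (\<lambda>n. ereal (X n)) > 0"
  shows "\<exists>c>0. \<forall>\<^sub>F n in sequentially. X n > c"
proof -
  obtain c where c: "0 < ereal c" "ereal c < liminf (\<lambda>n. ereal (X n))"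
    using ereal_dense2[OF assms] by blast
  have "\<forall>\<^sub>F n in sequentially. ereal (X n) > ereal c" using less_LiminfD[OF c(2)] .
  then show ?thesis using c(1) by (intro exI[of _ c]) (auto elim: eventually_mono)
qed

lemma null_bound:
  fixes a b :: "nat \<Rightarrow> real"
  assumes "\<And>i. \<bar>a i\<bar> \<le> M * b i" "b \<longlonglongrightarrow> 0"
  shows "a \<longlonglongrightarrow> 0"
proof -
  have "(\<lambda>i. M * b i) \<longlonglongrightarrow> M * 0" by (intro tendsto_intros assms(2))
  hence l: "(\<lambda>i. M * b i) \<longlonglongrightarrow> 0" by simp
  hence l2: "(\<lambda>i. - (M * b i)) \<longlonglongrightarrow> - 0" by (intro tendsto_intros)
  show ?thesis
  proof (rule real_tendsto_sandwich[OF _ _ l2[simplified] l])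
    have "- (M * b n) \<le> a n \<and> a n \<le> M * b n" for n using assms(1)[of n] by (simp add: abs_le_iff)
    then show "\<forall>\<^sub>F n in sequentially. - (M * b n) \<le> a n" "\<forall>\<^sub>F n in sequentially. a n \<le> M * b n" by auto
  qed
qed

lemma gh_qne:
  assumes gh: "generalized_hybrid E lam gam S" and w: "w \<in> E" and p: "p \<in> fixset E S"
  shows "norm (S w - p) \<le> norm (w - p)"
proof -
  have pE: "p \<in> E" and Sp: "S p = p" using p by (auto simp: fixset_def)
  from gh w pE have "lam * (norm (S p - S w))\<^sup>2 + (1 - lam) * (norm (p - S w))\<^sup>2
     \<le> gam * (norm (S p - w))\<^sup>2 + (1 - gam) * (norm (p - w))\<^sup>2"
    unfolding generalized_hybrid_def by blast
  hence "(norm (p - S w))\<^sup>2 \<le> (norm (p - w))\<^sup>2" using Sp by (simp add: algebra_simps)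
  hence "norm (p - S w) \<le> norm (p - w)" using power2_le_imp_le by fastforce
  then show ?thesis by (simp add: norm_minus_commute)
qed

lemma fix_closed:
  fixes E :: "'a::real_inner set"
  assumes gh: "generalized_hybrid E lam gam S" and E: "closed E"
  shows "closed (fixset E S)"
  unfolding closed_sequential_limits
proof (intro allI impI, elim conjE)
  fix pk :: "nat \<Rightarrow> 'a" and p assume pk: "\<forall>n. pk n \<in> fixset E S" "pk \<longlonglongrightarrow> p"
  have pE: "p \<in> E" using closed_sequentially[OF E, of pk p] pk by (auto simp: fixset_def)
  have b: "\<bar>norm (pk n - S p)\<bar> \<le> 1 * norm (pk n - p)" for n
    using gh_qne[OF gh pE pk(1)[rule_format, of n]] by (simp add: norm_minus_commute)
  have "(\<lambda>n. norm (pk n - p)) \<longlonglongrightarrow> 0" using pk(2) by (simp add: LIM_zero tendsto_norm_zero)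
  hence "(\<lambda>n. norm (pk n - S p)) \<longlonglongrightarrow> 0" by (rule null_bound[OF b])
  hence "pk \<longlonglongrightarrow> S p" using tendsto_norm_zero_iff LIM_zero_cancel by blast
  hence "S p = p" using pk(2) LIMSEQ_unique by blast
  then show "p \<in> fixset E S" using pE by (simp add: fixset_def)
qed

lemma fix_convex:
  fixes E :: "'a::real_inner set"
  assumes gh: "generalized_hybrid E lam gam S" and E: "convex E"
  shows "convex (fixset E S)"
proof (rule convexI)
  fix p1 p2 and t1 t2 :: real
  assume p: "p1 \<in> fixset E S" "p2 \<in> fixset E S" and t: "0 \<le> t1" "0 \<le> t2" "t1 + t2 = 1"
  define t where "t = t2"
  have t1: "t1 = 1 - t" using t by (simp add: t_def)
  define p where "p = (1 - t) *\<^sub>R p1 + t *\<^sub>R p2"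
  have pE: "p \<in> E" using convE[OF E, of p1 p2 t] p t by (auto simp: p_def t_def fixset_def)
  have "(norm (S p - p))\<^sup>2 = (norm ((1 - t) *\<^sub>R (S p - p1) + t *\<^sub>R (S p - p2)))\<^sup>2"
    by (simp add: p_def algebra_simps)
  also have "\<dots> = (1 - t) * (norm (S p - p1))\<^sup>2 + t * (norm (S p - p2))\<^sup>2 - t * (1 - t) * (norm (p2 - p1))\<^sup>2"
    by (subst conv_sq) (simp add: algebra_simps)
  also have "\<dots> \<le> (1 - t) * (norm (p - p1))\<^sup>2 + t * (norm (p - p2))\<^sup>2 - t * (1 - t) * (norm (p2 - p1))\<^sup>2"
  proof -
    have "(norm (S p - p1))\<^sup>2 \<le> (norm (p - p1))\<^sup>2" "(norm (S p - p2))\<^sup>2 \<le> (norm (p - p2))\<^sup>2"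
      using gh_qne[OF gh pE p(1)] gh_qne[OF gh pE p(2)] by (auto intro: power_mono)
    then show ?thesis using t t1 by (smt (verit) mult_left_mono)
  qed
  also have "\<dots> = (norm ((1 - t) *\<^sub>R (p - p1) + t *\<^sub>R (p - p2)))\<^sup>2"
    by (subst conv_sq) (simp add: algebra_simps)
  also have "\<dots> = 0" by (simp add: p_def algebra_simps)
  finally have "S p = p" by simp
  then show "t1 *\<^sub>R p1 + t2 *\<^sub>R p2 \<in> fixset E S" using pE t1 by (simp add: fixset_def p_def t_def)
qed

lemma bif:
  assumes "bifunction_conditions E f"
  shows "\<And>x. x \<in> E \<Longrightarrow> f x x = 0"
    and "\<And>x y. x \<in> E \<Longrightarrow> y \<in> E \<Longrightarrow> f x y + f y x \<le> 0"
    and "\<And>x y z. x \<in> E \<Longrightarrow> y \<in> E \<Longrightarrow> z \<in> E \<Longrightarrow>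
        Limsup (at_right 0) (\<lambda>t::real. ereal (f (t *\<^sub>R z + (1 - t) *\<^sub>R x) y)) \<le> ereal (f x y)"
    and "\<And>x. x \<in> E \<Longrightarrow> convex_on E (\<lambda>y. f x y)"
    and "\<And>x. x \<in> E \<Longrightarrow> lsc_on E (\<lambda>y. f x y)"
  using assms unfolding bifunction_conditions_def by blast+

lemma minty:
  assumes bc: "bifunction_conditions E f" and E: "convex E" and z: "z \<in> E"
    and h: "\<forall>y\<in>E. f y z \<le> 0"
  shows "z \<in> EP E f"
proof -
  have "f z y \<ge> 0" if y: "y \<in> E" for y
  proof -
    have pos: "f (t *\<^sub>R y + (1 - t) *\<^sub>R z) y \<ge> 0" if t: "0 < t" "t < 1" for t
    proof -
      define w where "w = t *\<^sub>R y + (1 - t) *\<^sub>R z"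
      have w': "w = (1 - t) *\<^sub>R z + t *\<^sub>R y" by (simp add: w_def add.commute)
      have wE: "w \<in> E" using convE[OF E z y, of t] t by (simp add: w')
      have "0 = f w w" using bif(1)[OF bc wE] by simp
      also have "\<dots> \<le> (1 - t) * f w z + t * f w y"
        using convex_onD[OF bif(4)[OF bc wE], of t z y] t z y by (simp add: w')
      also have "\<dots> \<le> t * f w y"
      proof -
        have "f w z \<le> 0" using h wE by blast
        hence "(1 - t) * f w z \<le> 0" using t by (simp add: mult_nonneg_nonpos)
        then show ?thesis by simp
      qed
      finally show ?thesis using t by (simp add: w_def zero_le_mult_iff)
    qed
    have ev: "\<forall>\<^sub>F t in at_right 0. ereal 0 \<le> ereal (f (t *\<^sub>R y + (1 - t) *\<^sub>R z) y)"
      using eventually_at_right_real[of 0 1] by (rule eventually_mono) (use pos in auto)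
    have "ereal 0 \<le> Liminf (at_right 0) (\<lambda>t::real. ereal (f (t *\<^sub>R y + (1 - t) *\<^sub>R z) y))"
      by (rule Liminf_bounded[OF ev])
    also have "\<dots> \<le> Limsup (at_right 0) (\<lambda>t::real. ereal (f (t *\<^sub>R y + (1 - t) *\<^sub>R z) y))"
      by (rule Liminf_le_Limsup) simp
    also have "\<dots> \<le> ereal (f z y)" using bif(3)[OF bc z y y] .
    finally show ?thesis by simp
  qed
  then show ?thesis using z by (simp add: EP_def)
qed

lemma EP_char:
  assumes bc: "bifunction_conditions E f" and E: "convex E"
  shows "EP E f = {z\<in>E. \<forall>y\<in>E. f y z \<le> 0}"
proof
  show "EP E f \<subseteq> {z\<in>E. \<forall>y\<in>E. f y z \<le> 0}"
  proof
    fix z assume z: "z \<in> EP E f"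
    have "f y z \<le> 0" if "y \<in> E" for y
    proof -
      have "f z y \<ge> 0" using z that by (auto simp: EP_def)
      moreover have "z \<in> E" using z by (simp add: EP_def)
      ultimately show ?thesis using bif(2)[OF bc _ that, of z] by simp
    qed
    then show "z \<in> {z\<in>E. \<forall>y\<in>E. f y z \<le> 0}" using z by (auto simp: EP_def)
  qed
  show "{z\<in>E. \<forall>y\<in>E. f y z \<le> 0} \<subseteq> EP E f" using minty[OF bc E] by blast
qed

lemma sublevel_convex:
  assumes "convex_on E g"
  shows "convex {z\<in>E. g z \<le> c}"
proof (rule convexI)
  fix a b and s t :: real assume a: "a \<in> {z\<in>E. g z \<le> c}" "b \<in> {z\<in>E. g z \<le> c}" "0 \<le> s" "0 \<le> t" "s + t = 1"
  have E: "convex E" using assms convex_on_imp_convex by blast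
  have "s *\<^sub>R a + t *\<^sub>R b \<in> E" using a E by (auto simp: convex_def)
  moreover have "g (s *\<^sub>R a + t *\<^sub>R b) \<le> s * g a + t * g b"
    using assms a unfolding convex_on_def by auto
  moreover have "s * g a + t * g b \<le> s * c + t * c" using a by (auto intro!: add_mono mult_left_mono)
  moreover have "s * c + t * c = c" using a(5) by (metis distrib_right mult_1)
  ultimately show "s *\<^sub>R a + t *\<^sub>R b \<in> {z\<in>E. g z \<le> c}" by simp
qed

lemma EP_closed_convex:
  fixes E :: "'a::real_inner set"
  assumes bc: "bifunction_conditions E f" and E: "convex E" "closed E"
  shows "closed (EP E f)" "convex (EP E f)"
proof -
  have eq: "EP E f = E \<inter> (\<Inter>y\<in>E. {z\<in>E. f y z \<le> 0})" using EP_char[OF bc E(1)] by auto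
  show "closed (EP E f)" unfolding eq
    using E(2) lsc_closed_sublevel[OF E(2) bif(5)[OF bc]] by (intro closed_Int closed_INT) auto
  show "convex (EP E f)" unfolding eq
    using E(1) sublevel_convex[OF bif(4)[OF bc]] by (intro convex_Int convex_INT) auto
qed



lemma demiclosed:
  fixes E :: "'a::real_inner set"
  assumes gh: "generalized_hybrid E lam gam S" and UE: "\<And>i. U i \<in> E" and zE: "z \<in> E"
    and bd: "\<And>i. norm (U i - z) \<le> M"
    and wk: "\<And>w. (\<lambda>i. U i \<bullet> w) \<longlonglongrightarrow> z \<bullet> w"
    and e0: "(\<lambda>i. S (U i) - U i) \<longlonglongrightarrow> 0"
  shows "S z = z"
proof -
  define e where "e i = S (U i) - U i" for i
  define a where "a i = U i - z" for i
  define d where "d = z - S z"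
  have ineq: "2 * (a i \<bullet> d) + (norm d)\<^sup>2 \<le>
      gam * (2 * (a i \<bullet> e i) + (norm (e i))\<^sup>2) - lam * (2 * ((a i + d) \<bullet> e i) + (norm (e i))\<^sup>2)" for i
  proof -
    from gh UE[of i] zE have "lam * (norm (S (U i) - S z))\<^sup>2 + (1 - lam) * (norm (U i - S z))\<^sup>2
       \<le> gam * (norm (S (U i) - z))\<^sup>2 + (1 - gam) * (norm (U i - z))\<^sup>2"
      unfolding generalized_hybrid_def by blast
    moreover have "S (U i) - S z = (a i + d) + e i" "U i - S z = a i + d" "S (U i) - z = a i + e i" "U i - z = a i"
      by (simp_all add: a_def d_def e_def algebra_simps)
    ultimately have "lam * (norm ((a i + d) + e i))\<^sup>2 + (1 - lam) * (norm (a i + d))\<^sup>2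
       \<le> gam * (norm (a i + e i))\<^sup>2 + (1 - gam) * (norm (a i))\<^sup>2" by simp
    hence "lam * ((norm (a i + d))\<^sup>2 + 2 * ((a i + d) \<bullet> e i) + (norm (e i))\<^sup>2) + (1 - lam) * (norm (a i + d))\<^sup>2
       \<le> gam * ((norm (a i))\<^sup>2 + 2 * (a i \<bullet> e i) + (norm (e i))\<^sup>2) + (1 - gam) * (norm (a i))\<^sup>2"
      by (simp only: norm_add_sq[of "a i + d" "e i"] norm_add_sq[of "a i" "e i"])
    hence "(norm (a i + d))\<^sup>2 \<le> (norm (a i))\<^sup>2 + gam * (2 * (a i \<bullet> e i) + (norm (e i))\<^sup>2) - lam * (2 * ((a i + d) \<bullet> e i) + (norm (e i))\<^sup>2)"
      by (simp add: algebra_simps)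
    then show ?thesis by (simp add: norm_add_sq[of "a i" d])
  qed
  have e0': "e \<longlonglongrightarrow> 0" using e0 by (simp add: e_def[abs_def])
  have ne: "(\<lambda>i. norm (e i)) \<longlonglongrightarrow> 0" using e0' tendsto_norm_zero by blast
  have l1: "(\<lambda>i. a i \<bullet> d) \<longlonglongrightarrow> 0"
  proof -
    have "(\<lambda>i. U i \<bullet> d - z \<bullet> d) \<longlonglongrightarrow> z \<bullet> d - z \<bullet> d" by (intro tendsto_intros wk)
    then show ?thesis by (simp add: a_def inner_diff_left)
  qed
  have l2: "(\<lambda>i. a i \<bullet> e i) \<longlonglongrightarrow> 0"
    by (rule null_bound[OF _ ne, of _ M]) (use Cauchy_Schwarz_ineq2 bd a_def in \<open>smt (verit, best) mult_right_mono norm_ge_zero\<close>)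
  have l3: "(\<lambda>i. d \<bullet> e i) \<longlonglongrightarrow> 0"
    by (rule null_bound[OF _ ne, of _ "norm d"]) (use Cauchy_Schwarz_ineq2 in auto)
  have l4: "(\<lambda>i. (norm (e i))\<^sup>2) \<longlonglongrightarrow> 0" using tendsto_power[OF ne, of 2] by simp
  have "(\<lambda>i. 2 * (a i \<bullet> d) + (norm d)\<^sup>2) \<longlonglongrightarrow> 2 * 0 + (norm d)\<^sup>2" by (intro tendsto_intros l1)
  moreover have "(\<lambda>i. gam * (2 * (a i \<bullet> e i) + (norm (e i))\<^sup>2) - lam * (2 * ((a i + d) \<bullet> e i) + (norm (e i))\<^sup>2))
      \<longlonglongrightarrow> gam * (2 * 0 + 0) - lam * (2 * (0 + 0) + 0)"
    unfolding inner_add_left by (intro tendsto_intros l2 l3 l4)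
  ultimately have "2 * 0 + (norm d)\<^sup>2 \<le> gam * (2 * 0 + 0) - lam * (2 * (0 + 0) + 0)"
    using ineq by (intro LIMSEQ_le) auto
  hence "(norm d)\<^sup>2 \<le> 0" by simp
  then show ?thesis by (simp add: d_def)
qed



theorem theorem3p1:
  fixes E :: "'a::{real_inner, complete_space} set"
    and f :: "'a \<Rightarrow> 'a \<Rightarrow> real" and S :: "'a \<Rightarrow> 'a"
    and lam gam \<alpha> b :: real and x0 :: 'a
    and \<alpha>s \<beta>s r :: "nat \<Rightarrow> real" and x u y :: "nat \<Rightarrow> 'a"
  assumes "E \<noteq> {}" "closed E" "convex E"
    and "bifunction_conditions E f"
    and "generalized_hybrid E lam gam S"
    and "fixset E S \<inter> EP E f \<noteq> {}"
    and "\<alpha> > 0" "\<And>n. \<alpha> \<le> \<alpha>s n \<and> \<alpha>s n \<le> 1"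
    and "\<And>n. r n > 0" "liminf (\<lambda>n. ereal (r n)) > 0"
    and "0 < b" "b < 1" "\<And>n. b \<le> \<beta>s n \<and> \<beta>s n \<le> 1"
    and "liminf (\<lambda>n. ereal (\<beta>s n * (1 - \<beta>s n))) > 0"
    and "x0 \<in> E" "x 0 = x0"
    and "\<And>n. u n \<in> E \<and> (\<forall>z\<in>E. f (u n) z + (1 / r n) * ((z - u n) \<bullet> (u n - x n)) \<ge> 0)"
    and "\<And>n. y n = (1 - \<beta>s n) *\<^sub>R x n + \<beta>s n *\<^sub>R S (u n)"
    and "\<And>n. x (Suc n) = (1 - \<alpha>s n) *\<^sub>R x n + \<alpha>s n *\<^sub>R S (y n)"
  shows "\<exists>v \<in> fixset E S \<inter> EP E f. weakly_converges x v \<and>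
           (\<lambda>n. metric_proj (fixset E S \<inter> EP E f) (x n)) \<longlonglongrightarrow> v"
proof -
  note bc = assms(4) and gh = assms(5)
  define F where "F = fixset E S \<inter> EP E f"
  have SE: "\<And>w. w \<in> E \<Longrightarrow> S w \<in> E" using gh unfolding generalized_hybrid_def by blast
  have uE: "\<And>n. u n \<in> E" using assms(17) by blast
  have al: "\<And>n. \<alpha> \<le> \<alpha>s n" "\<And>n. \<alpha>s n \<le> 1" using assms(8) by auto
  have be: "\<And>n. b \<le> \<beta>s n" "\<And>n. \<beta>s n \<le> 1" using assms(13) by auto
  have yEx: "y n \<in> E" if "x n \<in> E" for n
  proof -
    have "0 \<le> \<beta>s n" "\<beta>s n \<le> 1" using be[of n] assms(11) by auto
    then show ?thesis unfolding assms(18) by (rule convE[OF assms(3) that SE[OF uE[of n]]])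
  qed
  have xE: "x n \<in> E \<and> y n \<in> E" for n
  proof (induction n)
    case 0
    have "x 0 \<in> E" using assms(15,16) by simp
    then show ?case using yEx by blast
  next
    case (Suc n)
    have "0 \<le> \<alpha>s n" "\<alpha>s n \<le> 1" using al[of n] assms(7) by auto
    hence "x (Suc n) \<in> E" unfolding assms(19)
      by (rule convE[OF assms(3) conjunct1[OF Suc] SE[OF conjunct2[OF Suc]]])
    then show ?case using yEx by blast
  qed
  have Fcl: "closed F" unfolding F_def
    using fix_closed[OF gh assms(2)] EP_closed_convex(1)[OF bc assms(3,2)] by (rule closed_Int)
  have Fcv: "convex F" unfolding F_def
    using fix_convex[OF gh assms(3)] EP_closed_convex(2)[OF bc assms(3,2)] by (rule convex_Int)
  have Fne: "F \<noteq> {}" using assms(6) F_def by simp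
  have resolv: "(norm (u n - p))\<^sup>2 \<le> (norm (x n - p))\<^sup>2 - (norm (u n - x n))\<^sup>2" if p: "p \<in> EP E f" for p n
  proof -
    have pE: "p \<in> E" using p by (simp add: EP_def)
    have h: "f (u n) p + (1 / r n) * ((p - u n) \<bullet> (u n - x n)) \<ge> 0" using assms(17)[of n] pE by blast
    have "f p (u n) \<ge> 0" using p uE by (simp add: EP_def)
    moreover have "f (u n) p + f p (u n) \<le> 0" using bif(2)[OF bc uE pE] .
    ultimately have "(1 / r n) * ((p - u n) \<bullet> (u n - x n)) \<ge> 0" using h by linarith
    hence t: "(p - u n) \<bullet> (u n - x n) \<ge> 0" using assms(9)[of n] by (simp add: zero_le_divide_iff)
    have "x n - p = (x n - u n) + (u n - p)" by simp
    hence "(norm (x n - p))\<^sup>2 = (norm (x n - u n))\<^sup>2 + 2 * ((x n - u n) \<bullet> (u n - p)) + (norm (u n - p))\<^sup>2"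
      by (metis norm_add_sq)
    moreover have "(x n - u n) \<bullet> (u n - p) = (p - u n) \<bullet> (u n - x n)"
      by (simp add: inner_diff_left inner_diff_right inner_commute)
    moreover have "(norm (x n - u n))\<^sup>2 = (norm (u n - x n))\<^sup>2" by (simp add: norm_minus_commute)
    ultimately show ?thesis using t by linarith
  qed
  have est: "(norm (x (Suc n) - p))\<^sup>2 \<le> (norm (x n - p))\<^sup>2 - \<alpha>s n * \<beta>s n * (norm (u n - x n))\<^sup>2
      - \<alpha>s n * (\<beta>s n * (1 - \<beta>s n)) * (norm (x n - S (u n)))\<^sup>2" if pF: "p \<in> F" for p n
  proof -
    define X where "X = (norm (x n - p))\<^sup>2"
    define D1 where "D1 = (norm (u n - x n))\<^sup>2"
    define D2 where "D2 = (norm (x n - S (u n)))\<^sup>2"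
    define \<beta> where "\<beta> = \<beta>s n"
    define a where "a = \<alpha>s n"
    have pfix: "p \<in> fixset E S" and pEP: "p \<in> EP E f" using pF by (auto simp: F_def)
    have b0: "0 \<le> \<beta>" "\<beta> \<le> 1" using be[of n] assms(11) by (auto simp: \<beta>_def)
    have a0: "0 \<le> a" "a \<le> 1" using al[of n] assms(7) by (auto simp: a_def)
    have h1: "(norm (S (u n) - p))\<^sup>2 \<le> X - D1"
    proof -
      have "norm (S (u n) - p) \<le> norm (u n - p)" by (rule gh_qne[OF gh uE pfix])
      hence "(norm (S (u n) - p))\<^sup>2 \<le> (norm (u n - p))\<^sup>2" by (intro power_mono) auto
      then show ?thesis using resolv[OF pEP, of n] unfolding X_def D1_def by linarith
    qed
    have "y n - p = (1 - \<beta>) *\<^sub>R (x n - p) + \<beta> *\<^sub>R (S (u n) - p)"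
      by (simp add: assms(18) \<beta>_def algebra_simps)
    hence h2: "(norm (y n - p))\<^sup>2 = (1 - \<beta>) * X + \<beta> * (norm (S (u n) - p))\<^sup>2 - \<beta> * (1 - \<beta>) * D2"
      by (simp add: conv_sq X_def D2_def)
    have "\<beta> * (norm (S (u n) - p))\<^sup>2 \<le> \<beta> * (X - D1)" using h1 b0 by (intro mult_left_mono) auto
    hence h3: "(norm (y n - p))\<^sup>2 \<le> X - \<beta> * D1 - \<beta> * (1 - \<beta>) * D2"
      using h2 by (simp add: algebra_simps)
    have "x (Suc n) - p = (1 - a) *\<^sub>R (x n - p) + a *\<^sub>R (S (y n) - p)"
      by (simp add: assms(19) a_def algebra_simps)
    hence h4: "(norm (x (Suc n) - p))\<^sup>2 = (1 - a) * X + a * (norm (S (y n) - p))\<^sup>2 - a * (1 - a) * (norm ((x n - p) - (S (y n) - p)))\<^sup>2"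
      by (simp add: conv_sq X_def)
    have "0 \<le> a * (1 - a) * (norm ((x n - p) - (S (y n) - p)))\<^sup>2" using a0 by simp
    moreover have "(norm (S (y n) - p))\<^sup>2 \<le> (norm (y n - p))\<^sup>2"
      using gh_qne[OF gh _ pfix, of "y n"] xE[of n] by (intro power_mono) auto
    hence "(norm (S (y n) - p))\<^sup>2 \<le> X - \<beta> * D1 - \<beta> * (1 - \<beta>) * D2" using h3 by linarith
    hence "a * (norm (S (y n) - p))\<^sup>2 \<le> a * (X - \<beta> * D1 - \<beta> * (1 - \<beta>) * D2)"
      using a0 by (intro mult_left_mono) auto
    moreover have "(1 - a) * X + a * (X - \<beta> * D1 - \<beta> * (1 - \<beta>) * D2) = X - a * \<beta> * D1 - a * (\<beta> * (1 - \<beta>)) * D2"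
      by (simp add: algebra_simps)
    ultimately have "(norm (x (Suc n) - p))\<^sup>2 \<le> X - a * \<beta> * D1 - a * (\<beta> * (1 - \<beta>)) * D2"
      using h4 by linarith
    then show ?thesis by (simp add: X_def D1_def D2_def a_def \<beta>_def)
  qed
  have nonneg: "0 \<le> \<alpha>s n * \<beta>s n * (norm (u n - x n))\<^sup>2" "0 \<le> \<alpha>s n * (\<beta>s n * (1 - \<beta>s n)) * (norm (x n - S (u n)))\<^sup>2" for n
    using al[of n] be[of n] assms(7,11) by auto
  have fejer: "norm (x (Suc n) - p) \<le> norm (x n - p)" if "p \<in> F" for p n
  proof -
    have "(norm (x (Suc n) - p))\<^sup>2 \<le> (norm (x n - p))\<^sup>2" using est[OF that, of n] nonneg[of n] by linarith
    then show ?thesis using power2_le_imp_le by fastforce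
  qed

  obtain p0 where p0: "p0 \<in> F" using Fne by blast
  define a where "a n = (norm (x n - p0))\<^sup>2" for n
  define D1 where "D1 n = (norm (u n - x n))\<^sup>2" for n
  define D2 where "D2 n = (norm (x n - S (u n)))\<^sup>2" for n
  have adec: "decseq a" unfolding decseq_Suc_iff a_def
    using fejer[OF p0] by (intro allI power_mono) auto
  obtain La where La: "a \<longlonglongrightarrow> La" using decseq_convergent[OF adec, of 0] by (auto simp: a_def)
  have diff: "(\<lambda>n. a n - a (Suc n)) \<longlonglongrightarrow> 0"
  proof -
    have "(\<lambda>n. a n - a (Suc n)) \<longlonglongrightarrow> La - La" by (intro tendsto_intros La LIMSEQ_Suc)
    then show ?thesis by simp
  qed
  have estp: "\<alpha>s n * \<beta>s n * D1 n + \<alpha>s n * (\<beta>s n * (1 - \<beta>s n)) * D2 n \<le> a n - a (Suc n)" for n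
    using est[OF p0, of n] by (simp add: a_def D1_def D2_def)
  have D1ge: "0 \<le> D1 n" "0 \<le> D2 n" for n by (simp_all add: D1_def D2_def)
  have D1le: "\<alpha> * b * D1 n \<le> a n - a (Suc n)" for n
  proof -
    have "\<alpha> * b \<le> \<alpha>s n * \<beta>s n" using al[of n] be[of n] assms(7,11) by (intro mult_mono) auto
    hence "\<alpha> * b * D1 n \<le> \<alpha>s n * \<beta>s n * D1 n" using D1ge by (intro mult_right_mono) auto
    then show ?thesis using estp[of n] nonneg(2)[of n] by (simp add: D2_def)
  qed
  have D1lim: "D1 \<longlonglongrightarrow> 0"
  proof -
    have "(\<lambda>n. \<alpha> * b * D1 n) \<longlonglongrightarrow> 0"
      by (rule real_tendsto_sandwich[OF _ _ tendsto_const diff])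
        (use D1le D1ge assms(7,11) in auto)
    hence "(\<lambda>n. (1 / (\<alpha> * b)) * (\<alpha> * b * D1 n)) \<longlonglongrightarrow> (1 / (\<alpha> * b)) * 0" by (intro tendsto_intros)
    then show ?thesis using assms(7,11) by simp
  qed
  have ux: "(\<lambda>n. norm (u n - x n)) \<longlonglongrightarrow> 0"
  proof -
    have "(\<lambda>n. sqrt (D1 n)) \<longlonglongrightarrow> sqrt 0" by (intro tendsto_intros D1lim)
    then show ?thesis by (simp add: D1_def)
  qed
  obtain cb where cb: "cb > 0" "\<forall>\<^sub>F n in sequentially. \<beta>s n * (1 - \<beta>s n) > cb"
    using liminf_pos[OF assms(14)] by blast
  have D2lim: "D2 \<longlonglongrightarrow> 0"
  proof -
    have "(\<lambda>n. \<alpha> * cb * D2 n) \<longlonglongrightarrow> 0"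
    proof (rule real_tendsto_sandwich[OF _ _ tendsto_const diff])
      show "\<forall>\<^sub>F n in sequentially. 0 \<le> \<alpha> * cb * D2 n" using D1ge assms(7) cb(1) by auto
      show "\<forall>\<^sub>F n in sequentially. \<alpha> * cb * D2 n \<le> a n - a (Suc n)"
        using cb(2)
      proof eventually_elim
        case (elim n)
        have "\<alpha> * cb \<le> \<alpha>s n * (\<beta>s n * (1 - \<beta>s n))" using al[of n] elim assms(7) cb(1)
          by (intro mult_mono) auto
        hence "\<alpha> * cb * D2 n \<le> \<alpha>s n * (\<beta>s n * (1 - \<beta>s n)) * D2 n" using D1ge by (intro mult_right_mono) auto
        then show ?case using estp[of n] nonneg(1)[of n] by (simp add: D1_def)
      qed
    qed
    hence "(\<lambda>n. (1 / (\<alpha> * cb)) * (\<alpha> * cb * D2 n)) \<longlonglongrightarrow> (1 / (\<alpha> * cb)) * 0" by (intro tendsto_intros)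
    then show ?thesis using assms(7) cb(1) by simp
  qed
  have xSu: "(\<lambda>n. norm (x n - S (u n))) \<longlonglongrightarrow> 0"
  proof -
    have "(\<lambda>n. sqrt (D2 n)) \<longlonglongrightarrow> sqrt 0" by (intro tendsto_intros D2lim)
    then show ?thesis by (simp add: D2_def)
  qed
  have ux0: "(\<lambda>n. u n - x n) \<longlonglongrightarrow> 0" using ux tendsto_norm_zero_iff by blast
  have xSu0: "(\<lambda>n. x n - S (u n)) \<longlonglongrightarrow> 0" using xSu tendsto_norm_zero_iff by blast
  have Suu: "(\<lambda>n. S (u n) - u n) \<longlonglongrightarrow> 0"
  proof -
    have "(\<lambda>n. - (u n - x n) - (x n - S (u n))) \<longlonglongrightarrow> - 0 - 0" by (intro tendsto_intros ux0 xSu0)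
    then show ?thesis by (simp add: algebra_simps)
  qed
  define R where "R = norm (x 0 - p0)"
  have xR: "norm (x n - p0) \<le> R" for n using fejer_mono[of x p0 0 n] fejer[OF p0] by (simp add: R_def)
  have uR: "norm (u n - p0) \<le> R" for n
  proof -
    have "p0 \<in> EP E f" using p0 by (simp add: F_def)
    from resolv[OF this, of n] have "(norm (u n - p0))\<^sup>2 \<le> (norm (x n - p0))\<^sup>2"
      using zero_le_power2[of "norm (u n - x n)"] by linarith
    hence "norm (u n - p0) \<le> norm (x n - p0)" using power2_le_imp_le by fastforce
    then show ?thesis using xR[of n] by linarith
  qed
  have xB: "norm (x n) \<le> R + norm p0" for n using xR[of n] norm_triangle_sub[of "x n" p0] by linarith
  have uB: "norm (u n) \<le> R + norm p0" for n using uR[of n] norm_triangle_sub[of "u n" p0] by linarith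

  obtain cr where cr: "cr > 0" "\<forall>\<^sub>F n in sequentially. r n > cr"
    using liminf_pos[OF assms(10)] by blast
  have cluster: "z \<in> F" if sig: "strict_mono \<sigma>" and wk: "\<And>w. (\<lambda>i. x (\<sigma> i) \<bullet> w) \<longlonglongrightarrow> z \<bullet> w" for \<sigma> z
  proof -
    define U where "U i = u (\<sigma> i)" for i
    have uxs: "(\<lambda>i. norm (u (\<sigma> i) - x (\<sigma> i))) \<longlonglongrightarrow> 0"
      using LIMSEQ_subseq_LIMSEQ[OF ux sig] by (simp add: o_def)
    have wU: "(\<lambda>i. U i \<bullet> w) \<longlonglongrightarrow> z \<bullet> w" for w
    proof -
      have "(\<lambda>i. (u (\<sigma> i) - x (\<sigma> i)) \<bullet> w) \<longlonglongrightarrow> 0"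
        by (rule null_bound[OF _ uxs, of _ "norm w"]) (metis Cauchy_Schwarz_ineq2 mult.commute)
      hence "(\<lambda>i. x (\<sigma> i) \<bullet> w + (u (\<sigma> i) - x (\<sigma> i)) \<bullet> w) \<longlonglongrightarrow> z \<bullet> w + 0" by (intro tendsto_intros wk)
      then show ?thesis by (simp add: U_def inner_diff_left)
    qed
    have UE: "U i \<in> E" for i by (simp add: U_def uE)
    have zE: "z \<in> E" by (rule weak_closed[OF assms(2,3) UE wU])
    have Sz: "S z = z"
    proof (rule demiclosed[OF gh UE zE _ wU])
      show "norm (U i - z) \<le> R + norm p0 + norm z" for i
        using uB[of "\<sigma> i"] norm_triangle_ineq4[of "U i" z] by (simp add: U_def)
      show "(\<lambda>i. S (U i) - U i) \<longlonglongrightarrow> 0" using LIMSEQ_subseq_LIMSEQ[OF Suu sig] by (simp add: o_def U_def)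
    qed
    have "f yy z \<le> 0" if yy: "yy \<in> E" for yy
    proof (rule field_le_epsilon)
      fix eps :: real assume eps: "eps > 0"
      define K where "K = norm yy + norm p0 + R"
      define g where "g n = (1 / cr) * (K * norm (u n - x n))" for n
      have g0: "g \<longlonglongrightarrow> 0"
      proof -
        have "g \<longlonglongrightarrow> (1 / cr) * (K * 0)" unfolding g_def[abs_def] by (intro tendsto_intros ux)
        then show ?thesis by simp
      qed
      have evg: "\<forall>\<^sub>F n in sequentially. f yy (u n) \<le> g n"
        using cr(2)
      proof eventually_elim
        case (elim n)
        define t where "t = (yy - u n) \<bullet> (u n - x n)"
        have h: "f (u n) yy + (1 / r n) * t \<ge> 0" using assms(17)[of n] yy by (simp add: t_def)
        have "f (u n) yy + f yy (u n) \<le> 0" using bif(2)[OF bc uE yy] .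
        hence "f yy (u n) \<le> (1 / r n) * t" using h by linarith
        also have "\<dots> \<le> (1 / r n) * \<bar>t\<bar>" using assms(9)[of n] by (intro mult_left_mono) auto
        also have "\<dots> \<le> (1 / cr) * \<bar>t\<bar>" using elim cr(1) by (intro mult_right_mono) (auto simp: frac_le)
        also have "\<dots> \<le> g n" unfolding g_def
        proof (intro mult_left_mono)
          have "\<bar>t\<bar> \<le> norm (yy - u n) * norm (u n - x n)" unfolding t_def by (rule Cauchy_Schwarz_ineq2)
          also have "\<dots> \<le> K * norm (u n - x n)"
          proof (intro mult_right_mono)
            show "norm (yy - u n) \<le> K" using norm_triangle_ineq4[of yy "u n"] uB[of n] by (simp add: K_def)
          qed simp
          finally show "\<bar>t\<bar> \<le> K * norm (u n - x n)" .
        qed (use cr(1) in simp)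
        finally show ?case .
      qed
      have "\<forall>\<^sub>F n in sequentially. g n < eps" using order_tendstoD(2)[OF g0 eps] .
      with evg have "\<forall>\<^sub>F n in sequentially. f yy (u n) \<le> eps" by eventually_elim simp
      then obtain N where N: "\<And>n. n \<ge> N \<Longrightarrow> f yy (u n) \<le> eps" unfolding eventually_sequentially by blast
      define V where "V i = U (i + N)" for i
      have VK: "V i \<in> {w\<in>E. f yy w \<le> eps}" for i
      proof -
        have "\<sigma> (i + N) \<ge> N" using seq_suble[OF sig, of "i + N"] by simp
        then show ?thesis using N UE by (simp add: V_def U_def)
      qed
      have wV: "(\<lambda>i. V i \<bullet> w) \<longlonglongrightarrow> z \<bullet> w" for w
        unfolding V_def using LIMSEQ_ignore_initial_segment[OF wU[of w], of N] .
      have "z \<in> {w\<in>E. f yy w \<le> eps}"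
        by (rule weak_closed[OF lsc_closed_sublevel[OF assms(2) bif(5)[OF bc yy]]
              sublevel_convex[OF bif(4)[OF bc yy]] VK wV])
      then show "f yy z \<le> 0 + eps" by simp
    qed
    hence "z \<in> EP E f" by (intro minty[OF bc assms(3) zE]) blast
    then show ?thesis using Sz zE by (simp add: F_def fixset_def)
  qed
  obtain v where vF: "v \<in> F" and Pv: "(\<lambda>n. metric_proj F (x n)) \<longlonglongrightarrow> v"
    using TT[OF Fcl Fcv Fne, of x] fejer by blast
  have "weakly_converges x v" unfolding weakly_converges_def
  proof
    fix w
    show "(\<lambda>n. x n \<bullet> w) \<longlonglongrightarrow> v \<bullet> w"
    proof (rule ccontr)
      assume nc: "\<not> ?thesis"
      from not_tendsto_subseq[OF nc] obtain eps and s :: "nat \<Rightarrow> nat" where eps: "eps > 0" and s: "strict_mono s"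
        and far': "\<forall>i. eps \<le> \<bar>x (s i) \<bullet> w - v \<bullet> w\<bar>" by blast
      have far: "eps \<le> \<bar>x (s i) \<bullet> w - v \<bullet> w\<bar>" for i using far' by blast
      obtain t z where t: "strict_mono t" and wz: "\<forall>w. (\<lambda>i. x (s (t i)) \<bullet> w) \<longlonglongrightarrow> z \<bullet> w"
        using weak_compact[of "\<lambda>i. x (s i)" "R + norm p0"] xB by blast
      define \<sigma> where "\<sigma> i = s (t i)" for i
      have sig: "strict_mono \<sigma>" unfolding \<sigma>_def using strict_mono_compose[OF s t] .
      have wz': "\<And>w. (\<lambda>i. x (\<sigma> i) \<bullet> w) \<longlonglongrightarrow> z \<bullet> w" using wz by (simp add: \<sigma>_def)
      have zF: "z \<in> F" by (rule cluster[OF sig wz'])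
      define P where "P n = metric_proj F (x n)" for n
      have Ps: "(\<lambda>i. P (\<sigma> i)) \<longlonglongrightarrow> v" using LIMSEQ_subseq_LIMSEQ[OF Pv sig] by (simp add: o_def P_def)
      have qle: "(x (\<sigma> i) - P (\<sigma> i)) \<bullet> (z - P (\<sigma> i)) \<le> 0" for i
        using metric_proj(2)[OF Fcl Fcv Fne zF] by (simp add: P_def)
      have n1: "(\<lambda>i. x (\<sigma> i) \<bullet> (v - P (\<sigma> i))) \<longlonglongrightarrow> 0"
      proof (rule null_bound[of _ "R + norm p0" "\<lambda>i. norm (v - P (\<sigma> i))"])
        show "\<bar>x (\<sigma> i) \<bullet> (v - P (\<sigma> i))\<bar> \<le> (R + norm p0) * norm (v - P (\<sigma> i))" for i
          using Cauchy_Schwarz_ineq2[of "x (\<sigma> i)" "v - P (\<sigma> i)"] xB[of "\<sigma> i"]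
          by (meson mult_right_mono norm_ge_zero order_trans)
        have "(\<lambda>i. P (\<sigma> i) - v) \<longlonglongrightarrow> 0" using Ps LIM_zero by blast
        then show "(\<lambda>i. norm (v - P (\<sigma> i))) \<longlonglongrightarrow> 0"
          using tendsto_norm_zero by (force simp: norm_minus_commute)
      qed
      have "(\<lambda>i. x (\<sigma> i) \<bullet> (z - v) + x (\<sigma> i) \<bullet> (v - P (\<sigma> i)) - P (\<sigma> i) \<bullet> (z - P (\<sigma> i)))
          \<longlonglongrightarrow> z \<bullet> (z - v) + 0 - v \<bullet> (z - v)"
        by (intro tendsto_intros wz' n1 Ps)
      moreover have "x (\<sigma> i) \<bullet> (z - v) + x (\<sigma> i) \<bullet> (v - P (\<sigma> i)) - P (\<sigma> i) \<bullet> (z - P (\<sigma> i))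
          = (x (\<sigma> i) - P (\<sigma> i)) \<bullet> (z - P (\<sigma> i))" for i
        by (simp add: inner_diff_left inner_diff_right)
      ultimately have "(\<lambda>i. (x (\<sigma> i) - P (\<sigma> i)) \<bullet> (z - P (\<sigma> i))) \<longlonglongrightarrow> (z - v) \<bullet> (z - v)"
        by (simp add: inner_diff_left inner_diff_right inner_commute)
      hence "(z - v) \<bullet> (z - v) \<le> 0" using qle by (simp add: LIMSEQ_le_const2)
      hence zv: "z = v" by (metis antisym inner_ge_zero inner_eq_zero_iff eq_iff_diff_eq_0)
      have "(\<lambda>i. x (\<sigma> i) \<bullet> w) \<longlonglongrightarrow> v \<bullet> w" using wz'[of w] zv by simp
      hence "\<forall>\<^sub>F i in sequentially. dist (x (\<sigma> i) \<bullet> w) (v \<bullet> w) < eps" using eps tendstoD by blast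
      then obtain i where "dist (x (\<sigma> i) \<bullet> w) (v \<bullet> w) < eps" using eventually_sequentially by auto
      then show False using far[of "t i"] by (simp add: \<sigma>_def dist_real_def)
    qed
  qed
  then show ?thesis using vF Pv by (auto simp: F_def)
qed

end
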